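(* Let $\mathcal{M}\subseteq\mathbb{S}^n$. Then $\mathcal{T}(\mathcal{M})$ is rank-one generated if and only if for every nonzero $X\in\mathcal{T}(\mathcal{M})$ we have $\mathrm{range}(X)\cap\mathcal{N}(\mathcal{M})\neq\{0\}$.
   Context: $\mathbb{S}^n$ denotes real symmetric $n\times n$ matrices with $\langle A,B\rangle=\mathrm{tr}(AB)$, $\mathbb{S}^n_+$ the PSD cone. For $\mathcal{M}\subseteq\mathbb{S}^n$, $\mathcal{T}(\mathcal{M})=\{X\in\mathbb{S}^n_+:\langle M,X\rangle=0\ \forall M\in\mathcal{M}\}$ and $\mathcal{N}(\mathcal{M})=\{x\in\mathbb{R}^n:x^\top Mx=0\ \forall M\in\mathcal{M}\}$. A closed convex cone $\mathcal{S}\subseteq\mathbb{S}^n_+$ is rank-one generated (ROG) if $\mathcal{S}=\mathrm{conv}(\mathcal{S}\cap\{xx^\top:x\in\mathbb{R}^n\})$. *)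

theory Defs
  imports "HOL-Analysis.Analysis"
begin

definition sym_mat :: "real^'n^'n \<Rightarrow> bool" where
  "sym_mat A \<longleftrightarrow> transpose A = A"

definition psd :: "real^'n^'n \<Rightarrow> bool" where
  "psd A \<longleftrightarrow> sym_mat A \<and> (\<forall>x. x \<bullet> (A *v x) \<ge> 0)"

definition mat_trace :: "real^'n^'n \<Rightarrow> real" where
  "mat_trace A = (\<Sum>i\<in>UNIV. A $ i $ i)"

definition frob :: "real^'n^'n \<Rightarrow> real^'n^'n \<Rightarrow> real" where
  "frob A B = mat_trace (A ** B)"

definition outer :: "real^'n \<Rightarrow> real^'n^'n" where
  "outer x = (\<chi> i j. x $ i * x $ j)"

definition T_set :: "(real^'n^'n) set \<Rightarrow> (real^'n^'n) set" where
  "T_set M = {X. psd X \<and> (\<forall>A\<in>M. frob A X = 0)}"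

definition N_set :: "(real^'n^'n) set \<Rightarrow> (real^'n) set" where
  "N_set M = {x. \<forall>A\<in>M. x \<bullet> (A *v x) = 0}"

definition ROG :: "(real^'n^'n) set \<Rightarrow> bool" where
  "ROG S \<longleftrightarrow> S = convex hull (S \<inter> {outer x | x. True})"

end

theory Submission
  imports Defs
begin

lemma outer_mult: "outer x *v v = (x \<bullet> v) *\<^sub>R x"
  by (simp add: outer_def matrix_vector_mult_def inner_vec_def vec_eq_iff sum_distrib_left mult.commute mult.left_commute)

lemma inner_outer: "v \<bullet> (outer x *v v) = (x \<bullet> v)^2"
  by (simp add: outer_mult power2_eq_square inner_commute)

lemma frob_outer: "frob A (outer x) = x \<bullet> (A *v x)"
  by (simp add: frob_def mat_trace_def outer_def matrix_matrix_mult_def matrix_vector_mult_def inner_vec_def sum_distrib_left mult.commute mult.left_commute)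

lemma sym_outer: "sym_mat (outer x)"
  by (simp add: sym_mat_def outer_def transpose_def vec_eq_iff mult.commute)

lemma psd_outer: "psd (outer x)"
  by (simp add: psd_def sym_outer inner_outer)

lemma sym_inner: assumes "sym_mat X" shows "v \<bullet> (X *v w) = w \<bullet> (X *v v)"
proof -
  have "v \<bullet> (X *v w) = (\<Sum>i\<in>UNIV. \<Sum>j\<in>UNIV. v$i * X$i$j * w$j)"
    by (simp add: inner_vec_def matrix_vector_mult_def sum_distrib_left mult.assoc)
  also have "\<dots> = (\<Sum>j\<in>UNIV. \<Sum>i\<in>UNIV. v$i * X$i$j * w$j)" by (rule sum.swap)
  also have "\<dots> = (\<Sum>j\<in>UNIV. \<Sum>i\<in>UNIV. w$j * X$j$i * v$i)"
  proof -
    have eq: "X$i$j = X$j$i" for i j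
      using assms unfolding sym_mat_def transpose_def by (metis vec_lambda_beta)
    have pw: "v$i * X$i$j * w$j = w$j * X$j$i * v$i" for i j
      by (subst eq) (simp only: ac_simps)
    show ?thesis by (simp only: pw)
  qed
  also have "\<dots> = w \<bullet> (X *v v)"
    by (simp add: inner_vec_def matrix_vector_mult_def sum_distrib_left mult.assoc)
  finally show ?thesis .
qed

lemma frob_add: "frob A (X + Y) = frob A X + frob A Y"
  by (simp add: frob_def mat_trace_def matrix_add_ldistrib sum.distrib)

lemma frob_scale: "frob A (c *\<^sub>R X) = c * frob A X"
  by (simp add: frob_def mat_trace_def sum_distrib_left matrix_matrix_mult_def mult.left_commute)


lemma mv_add: "(X + Y) *v (v::real^'n) = X *v v + Y *v v"
  by (simp add: matrix_vector_mult_def vec_eq_iff sum.distrib algebra_simps)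
lemma mv_scale: "(c *\<^sub>R (X::real^'n^'m)) *v v = c *\<^sub>R (X *v v)"
  by (simp add: matrix_vector_mult_def vec_eq_iff sum_distrib_left mult.assoc)
lemma mv_diff: "(X - Y) *v (v::real^'n) = X *v v - Y *v v"
  by (rule matrix_vector_mult_diff_rdistrib)

lemma sym_add: "sym_mat X \<Longrightarrow> sym_mat Y \<Longrightarrow> sym_mat (X + Y)"
  by (simp add: sym_mat_def transpose_def vec_eq_iff)
lemma sym_scale: "sym_mat X \<Longrightarrow> sym_mat (c *\<^sub>R X)"
  by (simp add: sym_mat_def transpose_def vec_eq_iff)
lemma sym_diff: "sym_mat X \<Longrightarrow> sym_mat Y \<Longrightarrow> sym_mat (X - Y)"
  by (simp add: sym_mat_def transpose_def vec_eq_iff)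

lemma T_convex: "convex (T_set M)"
  unfolding convex_def
proof (intro ballI allI impI)
  fix X Y and u v :: real
  assume X: "X \<in> T_set M" and Y: "Y \<in> T_set M" and uv: "0 \<le> u" "0 \<le> v" "u + v = 1"
  have "psd (u *\<^sub>R X + v *\<^sub>R Y)"
    using X Y uv unfolding psd_def T_set_def
    by (auto simp: sym_add sym_scale mv_add mv_scale inner_add_right)
  moreover have "\<forall>A\<in>M. frob A (u *\<^sub>R X + v *\<^sub>R Y) = 0"
    using X Y by (simp add: T_set_def frob_add frob_scale)
  ultimately show "u *\<^sub>R X + v *\<^sub>R Y \<in> T_set M" by (simp add: T_set_def)
qed

lemma psd_step:
  assumes P: "psd X" and w: "X *v w = x" and x0: "x \<noteq> 0"
  defines "c \<equiv> w \<bullet> x"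
  shows "c > 0" "psd (X - (1/c) *\<^sub>R outer x)" "(X - (1/c) *\<^sub>R outer x) *v w = 0"
    "\<And>v. X *v v = 0 \<Longrightarrow> (X - (1/c) *\<^sub>R outer x) *v v = 0"
proof -
  have S: "sym_mat X" and Q: "\<And>v. v \<bullet> (X *v v) \<ge> 0" using P by (auto simp: psd_def)
  have quad: "(v + s *\<^sub>R w) \<bullet> (X *v (v + s *\<^sub>R w)) = v \<bullet> (X *v v) + 2 * s * (v \<bullet> x) + s^2 * c" for v s
  proof -
    have "w \<bullet> (X *v v) = v \<bullet> x" using sym_inner[OF S, of w v] w by simp
    then show ?thesis
      by (simp add: matrix_vector_right_distrib matrix_vector_mult_scaleR inner_add_left inner_add_right w c_def power2_eq_square algebra_simps)
  qed
  have CS: "(v \<bullet> x)^2 \<le> (v \<bullet> (X *v v)) * c" for v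
  proof (cases "c = 0")
    case True
    have "v \<bullet> x = 0"
    proof (rule ccontr)
      assume ne: "v \<bullet> x \<noteq> 0"
      define s where "s = - (v \<bullet> (X *v v) + 1) / (2 * (v \<bullet> x))"
      have "0 \<le> v \<bullet> (X *v v) + 2 * s * (v \<bullet> x)" using Q[of "v + s *\<^sub>R w"] quad[of v s] True by simp
      also have "2 * s * (v \<bullet> x) = - (v \<bullet> (X *v v) + 1)" using ne by (simp add: s_def field_simps)
      finally show False by simp
    qed
    then show ?thesis using True by simp
  next
    case False
    have c0: "c \<ge> 0" using Q[of w] by (simp add: w c_def)
    with False have cp: "c > 0" by simp
    define s where "s = - (v \<bullet> x) / c"
    have "0 \<le> v \<bullet> (X *v v) + 2 * s * (v \<bullet> x) + s^2 * c" using Q[of "v + s *\<^sub>R w"] quad[of v s] by simp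
    also have "\<dots> = v \<bullet> (X *v v) - (v \<bullet> x)^2 / c" using cp by (simp add: s_def field_simps power2_eq_square)
    finally show ?thesis using cp by (simp add: field_simps)
  qed
  show cp: "c > 0"
  proof -
    have c0: "c \<ge> 0" using Q[of w] by (simp add: w c_def)
    moreover have "c \<noteq> 0"
    proof
      assume "c = 0"
      then have "(x \<bullet> x)^2 \<le> 0" using CS[of x] by simp
      then show False using x0 by simp
    qed
    ultimately show ?thesis by simp
  qed
  show "psd (X - (1/c) *\<^sub>R outer x)"
    unfolding psd_def
  proof
    show "sym_mat (X - (1/c) *\<^sub>R outer x)" by (intro sym_diff sym_scale S sym_outer)
    show "\<forall>v. 0 \<le> v \<bullet> ((X - (1/c) *\<^sub>R outer x) *v v)"
    proof
      fix v
      have "v \<bullet> ((X - (1/c) *\<^sub>R outer x) *v v) = v \<bullet> (X *v v) - (x \<bullet> v)^2 / c"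
        by (simp add: mv_diff mv_scale inner_diff_right inner_outer)
      also have "\<dots> \<ge> 0" using CS[of v] cp by (simp add: field_simps inner_commute)
      finally show "0 \<le> v \<bullet> ((X - (1/c) *\<^sub>R outer x) *v v)" .
    qed
  qed
  show "(X - (1/c) *\<^sub>R outer x) *v w = 0"
    using cp by (simp add: mv_diff mv_scale outer_mult w c_def inner_commute)
  fix v assume "X *v v = 0"
  moreover have "x \<bullet> v = w \<bullet> (X *v v)" using sym_inner[OF S, of v w] w by (simp add: inner_commute)
  ultimately show "(X - (1/c) *\<^sub>R outer x) *v v = 0"
    by (simp add: mv_diff mv_scale outer_mult)
qed


lemma mv_sum: "finite F \<Longrightarrow> (sum f F) *v (v::real^'n) = (\<Sum>t\<in>F. f t *v v)"
proof (induction F rule: finite_induct)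
  case empty
  then show ?case by (simp add: matrix_vector_mult_def vec_eq_iff)
next
  case (insert a F)
  then show ?case by (simp add: mv_add)
qed

lemma outer_scale: "outer (a *\<^sub>R x) = (a^2) *\<^sub>R outer x"
  by (simp add: outer_def vec_eq_iff power2_eq_square mult.commute mult.left_commute)

lemma outer_0: "outer 0 = 0"
  by (simp add: outer_def vec_eq_iff)

lemma frob_diff: "frob A (X - c *\<^sub>R Y) = frob A X - c * frob A Y"
  using frob_add[of A X "(-c) *\<^sub>R Y"] frob_scale[of A "-c" Y] by simp

lemma subspace_ker: "subspace {v. (X::real^'n^'m) *v v = 0}"
  by (auto simp: subspace_def matrix_vector_right_distrib matrix_vector_mult_scaleR)

lemma back_dir:
  fixes M :: "(real^'n^'n) set"
  assumes H: "\<forall>X\<in>T_set M. X \<noteq> 0 \<longrightarrow> range (\<lambda>v. X *v v) \<inter> N_set M \<noteq> {0}"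
  shows "X \<in> T_set M \<Longrightarrow> X \<in> convex hull (T_set M \<inter> {outer x | x. True})"
proof (induction "CARD('n) - dim {v. X *v v = 0}" arbitrary: X rule: less_induct)
  case less
  define S where "S = T_set M \<inter> {outer x | x. True}"
  define K where "K = convex hull S"
  have coneS: "cone S"
    unfolding cone_def S_def
  proof (intro ballI allI impI)
    fix Z and c :: real assume Z: "Z \<in> T_set M \<inter> {outer x |x. True}" and c: "0 \<le> c"
    then obtain z where z: "Z = outer z" by auto
    have e: "c *\<^sub>R Z = outer (sqrt c *\<^sub>R z)" using c by (simp add: z outer_scale)
    moreover have "psd (c *\<^sub>R Z)" unfolding e by (rule psd_outer)
    then have "c *\<^sub>R Z \<in> T_set M" using Z
      by (simp add: T_set_def frob_scale)
    ultimately show "c *\<^sub>R Z \<in> T_set M \<inter> {outer x |x. True}" by auto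
  qed
  have coneK: "cone K" unfolding K_def by (rule cone_convex_hull[OF coneS])
  have addK: "A + B \<in> K" if "A \<in> K" "B \<in> K" for A B
  proof -
    have "(1/2) *\<^sub>R A + (1/2) *\<^sub>R B \<in> K"
      using that unfolding K_def by (intro convexD convex_convex_hull) auto
    then have "2 *\<^sub>R ((1/2) *\<^sub>R A + (1/2) *\<^sub>R B) \<in> K" using coneK by (simp add: cone_def)
    then show ?thesis by (simp add: scaleR_add_right)
  qed
  show ?case
  proof (cases "X = 0")
    case True
    have "outer 0 \<in> S" unfolding S_def by (auto simp: T_set_def psd_outer frob_outer)
    then have "outer 0 \<in> K" unfolding K_def by (rule hull_inc)
    then show ?thesis using True by (simp add: outer_0 K_def S_def)
  next
    case False
    have ne: "range (\<lambda>v. X *v v) \<inter> N_set M \<noteq> {0}" using H less.prems False by blast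
    have "X *v 0 = 0" by (simp add: matrix_vector_mult_def vec_eq_iff)
    then have z0: "0 \<in> range (\<lambda>v. X *v v)" by (metis rangeI)
    have z1: "0 \<in> N_set M" by (simp add: N_set_def)
    obtain x where xr: "x \<in> range (\<lambda>v. X *v v)" and xN: "x \<in> N_set M" and x0: "x \<noteq> 0"
      using ne z0 z1 by blast
    then obtain w where w: "X *v w = x" by blast
    have P: "psd X" using less.prems by (simp add: T_set_def)
    define c where "c = w \<bullet> x"
    note st = psd_step[OF P w x0, folded c_def]
    define Y where "Y = X - (1/c) *\<^sub>R outer x"
    have xx: "\<forall>A\<in>M. frob A (outer x) = 0" using xN by (simp add: N_set_def frob_outer)
    have YT: "Y \<in> T_set M" using st(2) less.prems xx by (simp add: Y_def T_set_def frob_diff)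
    have sub: "{v. X *v v = 0} \<subset> {v. Y *v v = 0}"
    proof
      show "{v. X *v v = 0} \<subseteq> {v. Y *v v = 0}" using st(4) unfolding Y_def by blast
      have "w \<in> {v. Y *v v = 0}" using st(3) unfolding Y_def by blast
      moreover have "w \<notin> {v. X *v v = 0}" using w x0 by simp
      ultimately show "{v. X *v v = 0} \<noteq> {v. Y *v v = 0}" by blast
    qed
    have "dim {v. X *v v = 0} < dim {v. Y *v v = 0}"
      by (rule dim_psubset) (simp add: span_eq_iff[THEN iffD2, OF subspace_ker] sub)
    moreover have "dim {v. Y *v v = 0} \<le> CARD('n)" by (rule dim_subset_UNIV_cart)
    ultimately have "CARD('n) - dim {v. Y *v v = 0} < CARD('n) - dim {v. X *v v = 0}" by linarith
    from less.hyps[OF this YT] have YK: "Y \<in> K" by (simp add: K_def S_def)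
    have "outer x \<in> S" using xx by (auto simp: S_def T_set_def psd_outer)
    then have "outer x \<in> K" unfolding K_def by (rule hull_inc)
    then have "(1/c) *\<^sub>R outer x \<in> K" using coneK st(1) by (simp add: cone_def)
    from addK[OF YK this] have "X \<in> K" by (simp add: Y_def)
    then show ?thesis by (simp add: K_def S_def)
  qed
qed


lemma range_sym_ker:
  assumes S: "sym_mat (X::real^'n^'n)" and x: "\<And>v. X *v v = 0 \<Longrightarrow> x \<bullet> v = 0"
  shows "x \<in> range (\<lambda>v. X *v v)"
proof -
  have lin: "linear ((*v) X)" by (rule matrix_vector_mul_linear)
  have ker: "((*v) X) -` {0} = (range ((*v) X))\<^sup>\<bottom>"
  proof -
    have tX: "transpose X = X" using S by (simp add: sym_mat_def)
    have "adjoint ((*v) X) = (*v) X" using adjoint_matrix[of X] unfolding tX .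
    then show ?thesis using ker_orthogonal_comp_adjoint[OF lin] by simp
  qed
  have sub: "subspace (range ((*v) X))"
    by (rule linear_subspace_image[OF lin subspace_UNIV])
  have "x \<in> (((*v) X) -` {0})\<^sup>\<bottom>"
    using x by (auto simp: orthogonal_comp_def orthogonal_def inner_commute)
  then have "x \<in> range ((*v) X)" unfolding ker orthogonal_comp_self[OF sub] .
  then show ?thesis by simp
qed

lemma fwd_dir:
  assumes R: "ROG (T_set M)" and XT: "X \<in> T_set M" and X0: "X \<noteq> 0"
  shows "range (\<lambda>v. X *v v) \<inter> N_set M \<noteq> {0}"
proof -
  have "X \<in> convex hull (T_set M \<inter> {outer x | x. True})" using R XT by (simp add: ROG_def)
  then obtain F u where F: "finite F" "F \<subseteq> T_set M \<inter> {outer x | x. True}"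
    and u: "\<forall>t\<in>F. 0 \<le> u t" "sum u F = 1" and X: "(\<Sum>t\<in>F. u t *\<^sub>R t) = X"
  proof -
    from \<open>X \<in> convex hull (T_set M \<inter> {outer x | x. True})\<close>
    have "\<exists>F u. finite F \<and> F \<subseteq> T_set M \<inter> {outer x | x. True} \<and> (\<forall>t\<in>F. 0 \<le> u t) \<and> sum u F = 1 \<and> (\<Sum>t\<in>F. u t *\<^sub>R t) = X"
      by (simp only: convex_hull_explicit mem_Collect_eq)
    then show ?thesis using that by (elim exE conjE) blast
  qed
  have "\<exists>t\<in>F. u t *\<^sub>R t \<noteq> 0"
  proof (rule ccontr)
    assume "\<not> ?thesis"
    then have "(\<Sum>t\<in>F. u t *\<^sub>R t) = 0" by (intro sum.neutral) auto
    then show False using X X0 by simp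
  qed
  then obtain t where tF: "t \<in> F" and ut: "u t *\<^sub>R t \<noteq> 0" by blast
  then obtain x where tx: "t = outer x" using F by auto
  have "u t \<noteq> 0" using ut by auto
  moreover have "0 \<le> u t" using u tF by blast
  ultimately have upos: "u t > 0" by (simp add: less_le)
  have x0: "x \<noteq> 0" using ut tx outer_0 by auto
  have xN: "x \<in> N_set M" using F tF tx by (auto simp: T_set_def N_set_def frob_outer)
  have S: "sym_mat X" using XT by (simp add: T_set_def psd_def)
  have "x \<in> range (\<lambda>v. X *v v)"
  proof (rule range_sym_ker[OF S])
    fix v assume Xv: "X *v v = 0"
    have e1: "(\<Sum>s\<in>F. u s *\<^sub>R s) *v v = (\<Sum>s\<in>F. (u s *\<^sub>R s) *v v)"
      by (rule mv_sum[OF F(1)])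
    have e2: "v \<bullet> (\<Sum>s\<in>F. (u s *\<^sub>R s) *v v) = (\<Sum>s\<in>F. u s * (v \<bullet> (s *v v)))"
      by (simp only: inner_sum_right mv_scale inner_scaleR_right)
    have sum0: "(\<Sum>s\<in>F. u s * (v \<bullet> (s *v v))) = 0"
      using e1 e2 Xv X by simp
    have nn: "0 \<le> u s * (v \<bullet> (s *v v))" if sF: "s \<in> F" for s
    proof -
      have "s \<in> T_set M" using sF F(2) by blast
      then have "psd s" by (simp add: T_set_def)
      then have "0 \<le> v \<bullet> (s *v v)" by (simp add: psd_def)
      moreover have "0 \<le> u s" using u(1) sF by blast
      ultimately show ?thesis by simp
    qed
    have "\<forall>s\<in>F. u s * (v \<bullet> (s *v v)) = 0"
      using sum_nonneg_eq_0_iff[OF F(1), of "\<lambda>s. u s * (v \<bullet> (s *v v))"] nn sum0 by simp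
    then have "u t * (v \<bullet> (t *v v)) = 0" using tF by blast
    then have "(x \<bullet> v)^2 = 0" using upos by (simp add: tx inner_outer)
    then show "x \<bullet> v = 0" by simp
  qed
  then have "x \<in> range (\<lambda>v. X *v v) \<inter> N_set M" using xN by simp
  then show ?thesis using x0 by blast
qed

theorem corollary2p26:
  fixes M :: "(real^'n^'n) set"
  assumes "\<forall>A\<in>M. sym_mat A"
  shows "ROG (T_set M) \<longleftrightarrow>
         (\<forall>X\<in>T_set M. X \<noteq> 0 \<longrightarrow> range (\<lambda>v. X *v v) \<inter> N_set M \<noteq> {0})"
proof
  assume "ROG (T_set M)"
  then show "\<forall>X\<in>T_set M. X \<noteq> 0 \<longrightarrow> range (\<lambda>v. X *v v) \<inter> N_set M \<noteq> {0}"
    using fwd_dir by blast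
next
  assume H: "\<forall>X\<in>T_set M. X \<noteq> 0 \<longrightarrow> range (\<lambda>v. X *v v) \<inter> N_set M \<noteq> {0}"
  have "T_set M \<subseteq> convex hull (T_set M \<inter> {outer x | x. True})"
    using back_dir[OF H] by blast
  moreover have "convex hull (T_set M \<inter> {outer x | x. True}) \<subseteq> T_set M"
    by (rule hull_minimal) (auto simp: T_convex)
  ultimately show "ROG (T_set M)" unfolding ROG_def by blast
qed

end
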